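(* For every closed $\mathcal L$-term $t$, neither the code of the sentence $\mathrm Pt$ nor the code of the sentence $\neg\mathrm Pt$ belongs to $P_\infty^+$, where $(T_\infty,P_\infty)$ is the least fixed point of $\Gamma_{\mathscr{TP}}$ (the stage at which the sequence $(T_\alpha,P_\alpha)$ stabilizes).
   Context: Language. Let $\mathcal L_{\mathbb N}$ be the language of first-order Peano arithmetic and $\mathcal L=\mathcal L_{\mathbb N}\cup\{\mathrm T,\mathrm P\}$ with unary predicates $\mathrm T,\mathrm P$. $\mathcal L$-formulas are in Tait style: literals are $s=t$, $s\neq t$, $\mathrm Tt$, $\neg\mathrm Tt$, $\mathrm Pt$, $\neg\mathrm Pt$; formulas are built from literals by $\wedge,\vee,\forall,\exists$; negation of an arbitrary formula is defined by De Morgan dualities with $\neg\neg\varphi:=\varphi$. A standard Gödel numbering is fixed; $\#e$ is the code of $e$, $\ulcorner e\urcorner$ the numeral of $\#e$, $\mathrm{val}(t)$ the value of a closed term $t$, $\dot\neg$ the primitive recursive function with $\dot\neg(\#\varphi)=\#\neg\varphi$; $\mathrm T\varphi,\mathrm P\varphi$ abbreviate $\mathrm T\ulcorner\varphi\urcorner,\mathrm P\ulcorner\varphi\urcorner$. Semantics. A partial model is $(\mathbb N,T,P)$ with $\mathbb N$ the standard model and $T=(T^+,T^-)$, $P=(P^+,P^-)$ pairs of subsets of $\omega$. Strong Kleene satisfaction $\models_{SK}$: arithmetic literals evaluated in $\mathbb N$; $\mathrm Tt$ satisfied iff $\mathrm{val}(t)\in T^+$, $\neg\mathrm Tt$ iff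 $\mathrm{val}(t)\in T^-$, likewise for $\mathrm P$ with $P^\pm$; conjunction iff both, disjunction iff at least one, $\forall x\varphi(x)$ iff all numeral instances, $\exists x\varphi(x)$ iff some numeral instance. Base paradoxicality. $\mathrm{PA}[\mathrm{SK}]$ is the two-sided sequent calculus for Strong Kleene logic with identity in $\mathcal L$ (initial sequents $\varphi\Rightarrow\varphi$, cut, weakening, the rule from $\Gamma\Rightarrow\Delta,\varphi$ infer $\neg\varphi,\Gamma\Rightarrow\Delta$, usual rules for $\wedge,\vee,\forall,\exists$, reflexivity $\Rightarrow t=t$, replacement from $\Gamma\Rightarrow\Delta,\varphi(t)$ infer $\Gamma\Rightarrow\Delta,s\neq t,\varphi(s)$) plus the initial sequents of Peano arithmetic and the induction rule for all $\mathcal L$-formulas. A sentence $\varphi$ is base paradoxical iff $\mathrm{PA}[\mathrm{SK}]$ derives $\varphi\Leftrightarrow\neg\mathrm T\varphi$ and $\neg\varphi\Leftrightarrow\mathrm T\varphi$ ($\Leftrightarrow$ meaning both sequents). $B(x)$ is an $\mathcal L_{\mathbb N}$-formula defining in $\mathbb N$ the set of codes of base paradoxical sentences, and $\Pi(x):=B(x)\vee B(\dot\neg x)$. Jump and sequence. Let $\mathscr P(x)$ be the $\mathcal L$-formula which is the disjunction of: (1) $x$ codes a sentence and $\Pi(x)$; (2) $x$ codes a sentence $\mathrm Tt$ ($t$ a closed term) and $\mathrm P(\mathrm{val}(t))$; (3) $x$ codes a sentence $\neg\mathrm Tt$ and $\mathrm P(\mathrm{val}(t))$; (4) $x$ codes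 a sentence $\psi\wedge\theta$ and $(\mathrm P\psi\wedge\mathrm P\theta)\vee(\mathrm T\psi\wedge\mathrm P\theta)\vee(\mathrm T\theta\wedge\mathrm P\psi)$; (5) $x$ codes a sentence $\psi\vee\theta$ and $(\mathrm P\psi\wedge\mathrm P\theta)\vee(\neg\mathrm T\psi\wedge\mathrm P\theta)\vee(\neg\mathrm T\theta\wedge\mathrm P\psi)$; (6) $x$ codes a sentence $\forall v\psi$ and $\exists y\,\mathrm P\psi(\dot y)\wedge\forall y(\mathrm P\psi(\dot y)\vee\mathrm T\psi(\dot y))$; (7) $x$ codes a sentence $\exists v\psi$ and $\exists y\,\mathrm P\psi(\dot y)\wedge\forall y(\mathrm P\psi(\dot y)\vee\neg\mathrm T\psi(\dot y))$; here $\psi(\dot y)$ is the code of the result of substituting the numeral of $y$ for $v$. Write $\mathscr P(\varphi)$ for $\mathscr P(\ulcorner\varphi\urcorner)$. Define $\Gamma_{\mathscr{TP}}(T,P)=\big((\{\#\varphi:(\mathbb N,T,P)\models_{SK}\varphi\},\{\#\varphi:(\mathbb N,T,P)\models_{SK}\neg\varphi\}),(\{\#\varphi:(\mathbb N,T,P)\models_{SK}\mathscr P(\varphi)\},\{\#\varphi:(\mathbb N,T,P)\models_{SK}\varphi\vee\neg\varphi\})\big)$, $\varphi$ ranging over $\mathcal L$-sentences. Define $(T_0,P_0)=((\emptyset,\emptyset),(\emptyset,\emptyset))$, $(T_{\beta+1},P_{\beta+1})=\Gamma_{\mathscr{TP}}(T_\beta,P_\beta)$, $(T_\lambda,P_\lambda)=\bigcup_{\beta<\lambda}(T_\beta,P_\beta)$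 (componentwise union) for limit $\lambda$. This sequence reaches a fixed point $(T_\infty,P_\infty)$, $P_\infty=(P_\infty^+,P_\infty^-)$. *)

theory Defs
  imports Main "HOL-Library.Nat_Bijection" "HOL-Library.Product_Order"
begin

section \<open>Syntax of the language L = L_N + {T, P} (Tait style)\<close>

datatype tm = TVar nat | TZero | TSuc tm | TPlus tm tm | TTimes tm tm

datatype fm =
    FEq tm tm | FNeq tm tm
  | FT tm | FNT tm
  | FP tm | FNP tm
  | FAnd fm fm | FOr fm fm
  | FAll nat fm | FEx nat fm

fun neg :: "fm \<Rightarrow> fm" where
  "neg (FEq s t) = FNeq s t"
| "neg (FNeq s t) = FEq s t"
| "neg (FT t) = FNT t"
| "neg (FNT t) = FT t"
| "neg (FP t) = FNP t"
| "neg (FNP t) = FP t"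
| "neg (FAnd a b) = FOr (neg a) (neg b)"
| "neg (FOr a b) = FAnd (neg a) (neg b)"
| "neg (FAll x a) = FEx x (neg a)"
| "neg (FEx x a) = FAll x (neg a)"

fun tvars :: "tm \<Rightarrow> nat set" where
  "tvars (TVar n) = {n}"
| "tvars TZero = {}"
| "tvars (TSuc t) = tvars t"
| "tvars (TPlus s t) = tvars s \<union> tvars t"
| "tvars (TTimes s t) = tvars s \<union> tvars t"

fun fvars :: "fm \<Rightarrow> nat set" where
  "fvars (FEq s t) = tvars s \<union> tvars t"
| "fvars (FNeq s t) = tvars s \<union> tvars t"
| "fvars (FT t) = tvars t"
| "fvars (FNT t) = tvars t"
| "fvars (FP t) = tvars t"
| "fvars (FNP t) = tvars t"
| "fvars (FAnd a b) = fvars a \<union> fvars b"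
| "fvars (FOr a b) = fvars a \<union> fvars b"
| "fvars (FAll x a) = fvars a - {x}"
| "fvars (FEx x a) = fvars a - {x}"

definition closed :: "tm \<Rightarrow> bool" where
  "closed t \<longleftrightarrow> tvars t = {}"

definition sentence :: "fm \<Rightarrow> bool" where
  "sentence \<phi> \<longleftrightarrow> fvars \<phi> = {}"

fun tsubst :: "tm \<Rightarrow> nat \<Rightarrow> tm \<Rightarrow> tm" where
  "tsubst (TVar n) x u = (if n = x then u else TVar n)"
| "tsubst TZero x u = TZero"
| "tsubst (TSuc t) x u = TSuc (tsubst t x u)"
| "tsubst (TPlus s t) x u = TPlus (tsubst s x u) (tsubst t x u)"
| "tsubst (TTimes s t) x u = TTimes (tsubst s x u) (tsubst t x u)"

fun fsubst :: "fm \<Rightarrow> nat \<Rightarrow> tm \<Rightarrow> fm" where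
  "fsubst (FEq s t) x u = FEq (tsubst s x u) (tsubst t x u)"
| "fsubst (FNeq s t) x u = FNeq (tsubst s x u) (tsubst t x u)"
| "fsubst (FT t) x u = FT (tsubst t x u)"
| "fsubst (FNT t) x u = FNT (tsubst t x u)"
| "fsubst (FP t) x u = FP (tsubst t x u)"
| "fsubst (FNP t) x u = FNP (tsubst t x u)"
| "fsubst (FAnd a b) x u = FAnd (fsubst a x u) (fsubst b x u)"
| "fsubst (FOr a b) x u = FOr (fsubst a x u) (fsubst b x u)"
| "fsubst (FAll y a) x u = (if y = x then FAll y a else FAll y (fsubst a x u))"
| "fsubst (FEx y a) x u = (if y = x then FEx y a else FEx y (fsubst a x u))"

lemma size_fsubst [simp]: "size (fsubst a x u) = size a"
  by (induction a) auto

fun free_for :: "tm \<Rightarrow> nat \<Rightarrow> fm \<Rightarrow> bool" where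
  "free_for u x (FAnd a b) = (free_for u x a \<and> free_for u x b)"
| "free_for u x (FOr a b) = (free_for u x a \<and> free_for u x b)"
| "free_for u x (FAll y a) = (x \<notin> fvars (FAll y a) \<or> (y \<notin> tvars u \<and> free_for u x a))"
| "free_for u x (FEx y a) = (x \<notin> fvars (FEx y a) \<or> (y \<notin> tvars u \<and> free_for u x a))"
| "free_for u x _ = True"

fun num :: "nat \<Rightarrow> tm" where
  "num 0 = TZero"
| "num (Suc n) = TSuc (num n)"

text \<open>Value of a (closed) term in the standard model; variables get 0 (irrelevant for closed terms).\<close>
fun val :: "tm \<Rightarrow> nat" where
  "val (TVar n) = 0"
| "val TZero = 0"
| "val (TSuc t) = Suc (val t)"
| "val (TPlus s t) = val s + val t"
| "val (TTimes s t) = val s * val t"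

fun tcode :: "tm \<Rightarrow> nat" where
  "tcode (TVar n) = prod_encode (0, n)"
| "tcode TZero = prod_encode (1, 0)"
| "tcode (TSuc t) = prod_encode (2, tcode t)"
| "tcode (TPlus s t) = prod_encode (3, prod_encode (tcode s, tcode t))"
| "tcode (TTimes s t) = prod_encode (4, prod_encode (tcode s, tcode t))"

fun code :: "fm \<Rightarrow> nat" where
  "code (FEq s t) = prod_encode (0, prod_encode (tcode s, tcode t))"
| "code (FNeq s t) = prod_encode (1, prod_encode (tcode s, tcode t))"
| "code (FT t) = prod_encode (2, tcode t)"
| "code (FNT t) = prod_encode (3, tcode t)"
| "code (FP t) = prod_encode (4, tcode t)"
| "code (FNP t) = prod_encode (5, tcode t)"
| "code (FAnd a b) = prod_encode (6, prod_encode (code a, code b))"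
| "code (FOr a b) = prod_encode (7, prod_encode (code a, code b))"
| "code (FAll x a) = prod_encode (8, prod_encode (x, code a))"
| "code (FEx x a) = prod_encode (9, prod_encode (x, code a))"

definition quote :: "fm \<Rightarrow> tm" where
  "quote \<phi> = num (code \<phi>)"

section \<open>Strong Kleene satisfaction in (N, T, P), for sentences\<close>

type_synonym pint = "nat set \<times> nat set"  (* (extension, anti-extension) *)

function sat :: "pint \<Rightarrow> pint \<Rightarrow> fm \<Rightarrow> bool" where
  "sat T P (FEq s t) = (val s = val t)"
| "sat T P (FNeq s t) = (val s \<noteq> val t)"
| "sat T P (FT t) = (val t \<in> fst T)"
| "sat T P (FNT t) = (val t \<in> snd T)"
| "sat T P (FP t) = (val t \<in> fst P)"
| "sat T P (FNP t) = (val t \<in> snd P)"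
| "sat T P (FAnd a b) = (sat T P a \<and> sat T P b)"
| "sat T P (FOr a b) = (sat T P a \<or> sat T P b)"
| "sat T P (FAll x a) = (\<forall>n. sat T P (fsubst a x (num n)))"
| "sat T P (FEx x a) = (\<exists>n. sat T P (fsubst a x (num n)))"
  by pat_completeness auto
termination
  by (relation "measure (\<lambda>(T, P, \<phi>). size \<phi>)") auto

definition fvs :: "fm set \<Rightarrow> nat set" where
  "fvs \<Gamma> = (\<Union>\<phi>\<in>\<Gamma>. fvars \<phi>)"

inductive derivable :: "fm set \<Rightarrow> fm set \<Rightarrow> bool" where
  init: "derivable {\<phi>} {\<phi>}"
| cut: "derivable \<Gamma> (\<Delta> \<union> {\<phi>}) \<Longrightarrow> derivable (\<Gamma> \<union> {\<phi>}) \<Delta> \<Longrightarrow> derivable \<Gamma> \<Delta>"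
| weak: "derivable \<Gamma> \<Delta> \<Longrightarrow> \<Gamma> \<subseteq> \<Gamma>' \<Longrightarrow> \<Delta> \<subseteq> \<Delta>' \<Longrightarrow> finite \<Gamma>' \<Longrightarrow> finite \<Delta>'
          \<Longrightarrow> derivable \<Gamma>' \<Delta>'"
| negL: "derivable \<Gamma> (\<Delta> \<union> {\<phi>}) \<Longrightarrow> derivable (\<Gamma> \<union> {neg \<phi>}) \<Delta>"
| andR: "derivable \<Gamma> (\<Delta> \<union> {\<phi>}) \<Longrightarrow> derivable \<Gamma> (\<Delta> \<union> {\<psi>})
          \<Longrightarrow> derivable \<Gamma> (\<Delta> \<union> {FAnd \<phi> \<psi>})"
| andL: "derivable (\<Gamma> \<union> {\<phi>, \<psi>}) \<Delta> \<Longrightarrow> derivable (\<Gamma> \<union> {FAnd \<phi> \<psi>}) \<Delta>"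
| orR: "derivable \<Gamma> (\<Delta> \<union> {\<phi>, \<psi>}) \<Longrightarrow> derivable \<Gamma> (\<Delta> \<union> {FOr \<phi> \<psi>})"
| orL: "derivable (\<Gamma> \<union> {\<phi>}) \<Delta> \<Longrightarrow> derivable (\<Gamma> \<union> {\<psi>}) \<Delta>
          \<Longrightarrow> derivable (\<Gamma> \<union> {FOr \<phi> \<psi>}) \<Delta>"
| allR: "derivable \<Gamma> (\<Delta> \<union> {fsubst \<phi> x (TVar y)}) \<Longrightarrow> free_for (TVar y) x \<phi>
          \<Longrightarrow> y \<notin> fvs \<Gamma> \<Longrightarrow> y \<notin> fvs \<Delta> \<Longrightarrow> y \<notin> fvars (FAll x \<phi>)
          \<Longrightarrow> derivable \<Gamma> (\<Delta> \<union> {FAll x \<phi>})"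
| allL: "derivable (\<Gamma> \<union> {fsubst \<phi> x t}) \<Delta> \<Longrightarrow> free_for t x \<phi>
          \<Longrightarrow> derivable (\<Gamma> \<union> {FAll x \<phi>}) \<Delta>"
| exR: "derivable \<Gamma> (\<Delta> \<union> {fsubst \<phi> x t}) \<Longrightarrow> free_for t x \<phi>
          \<Longrightarrow> derivable \<Gamma> (\<Delta> \<union> {FEx x \<phi>})"
| exL: "derivable (\<Gamma> \<union> {fsubst \<phi> x (TVar y)}) \<Delta> \<Longrightarrow> free_for (TVar y) x \<phi>
          \<Longrightarrow> y \<notin> fvs \<Gamma> \<Longrightarrow> y \<notin> fvs \<Delta> \<Longrightarrow> y \<notin> fvars (FEx x \<phi>)
          \<Longrightarrow> derivable (\<Gamma> \<union> {FEx x \<phi>}) \<Delta>"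
| refl: "derivable {} {FEq t t}"
| repl: "derivable \<Gamma> (\<Delta> \<union> {fsubst \<phi> x t}) \<Longrightarrow> free_for t x \<phi> \<Longrightarrow> free_for s x \<phi>
          \<Longrightarrow> derivable \<Gamma> (\<Delta> \<union> {FNeq s t, fsubst \<phi> x s})"
| pa1: "derivable {FEq (TSuc s) TZero} {}"
| pa2: "derivable {FEq (TSuc s) (TSuc t)} {FEq s t}"
| pa3: "derivable {} {FEq (TPlus s TZero) s}"
| pa4: "derivable {} {FEq (TPlus s (TSuc t)) (TSuc (TPlus s t))}"
| pa5: "derivable {} {FEq (TTimes s TZero) TZero}"
| pa6: "derivable {} {FEq (TTimes s (TSuc t)) (TPlus (TTimes s t) s)}"
| ind: "derivable (\<Gamma> \<union> {\<phi>}) (\<Delta> \<union> {fsubst \<phi> x (TSuc (TVar x))})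
          \<Longrightarrow> x \<notin> fvs \<Gamma> \<Longrightarrow> x \<notin> fvs \<Delta> \<Longrightarrow> free_for t x \<phi>
          \<Longrightarrow> derivable (\<Gamma> \<union> {fsubst \<phi> x TZero}) (\<Delta> \<union> {fsubst \<phi> x t})"

definition base_paradoxical :: "fm \<Rightarrow> bool" where
  "base_paradoxical \<phi> \<longleftrightarrow> sentence \<phi>
     \<and> derivable {\<phi>} {FNT (quote \<phi>)} \<and> derivable {FNT (quote \<phi>)} {\<phi>}
     \<and> derivable {neg \<phi>} {FT (quote \<phi>)} \<and> derivable {FT (quote \<phi>)} {neg \<phi>}"

text \<open>Clause (1): Pi(#phi) = B(#phi) or B(dot-neg #phi) = B(#phi) or B(#(neg phi)),
  where B defines in N the set of codes of base paradoxical sentences.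
  The remaining clauses are the SK-evaluation of clauses (2)-(7).\<close>
definition satP :: "pint \<Rightarrow> pint \<Rightarrow> fm \<Rightarrow> bool" where
  "satP T P \<phi> \<longleftrightarrow>
     (sentence \<phi> \<and> (base_paradoxical \<phi> \<or> base_paradoxical (neg \<phi>)))
   \<or> (\<exists>t. closed t \<and> \<phi> = FT t \<and> val t \<in> fst P)
   \<or> (\<exists>t. closed t \<and> \<phi> = FNT t \<and> val t \<in> fst P)
   \<or> (\<exists>\<psi> \<theta>. sentence \<phi> \<and> \<phi> = FAnd \<psi> \<theta> \<and>
        ((code \<psi> \<in> fst P \<and> code \<theta> \<in> fst P) \<or> (code \<psi> \<in> fst T \<and> code \<theta> \<in> fst P)
         \<or> (code \<theta> \<in> fst T \<and> code \<psi> \<in> fst P)))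
   \<or> (\<exists>\<psi> \<theta>. sentence \<phi> \<and> \<phi> = FOr \<psi> \<theta> \<and>
        ((code \<psi> \<in> fst P \<and> code \<theta> \<in> fst P) \<or> (code \<psi> \<in> snd T \<and> code \<theta> \<in> fst P)
         \<or> (code \<theta> \<in> snd T \<and> code \<psi> \<in> fst P)))
   \<or> (\<exists>v \<psi>. sentence \<phi> \<and> \<phi> = FAll v \<psi> \<and>
        (\<exists>y. code (fsubst \<psi> v (num y)) \<in> fst P) \<and>
        (\<forall>y. code (fsubst \<psi> v (num y)) \<in> fst P \<or> code (fsubst \<psi> v (num y)) \<in> fst T))
   \<or> (\<exists>v \<psi>. sentence \<phi> \<and> \<phi> = FEx v \<psi> \<and>
        (\<exists>y. code (fsubst \<psi> v (num y)) \<in> fst P) \<and>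
        (\<forall>y. code (fsubst \<psi> v (num y)) \<in> fst P \<or> code (fsubst \<psi> v (num y)) \<in> snd T))"

definition GammaTP :: "pint \<times> pint \<Rightarrow> pint \<times> pint" where
  "GammaTP TP = (let T = fst TP; P = snd TP in
     (({code \<phi> | \<phi>. sentence \<phi> \<and> sat T P \<phi>},
       {code \<phi> | \<phi>. sentence \<phi> \<and> sat T P (neg \<phi>)}),
      ({code \<phi> | \<phi>. sentence \<phi> \<and> satP T P \<phi>},
       {code \<phi> | \<phi>. sentence \<phi> \<and> sat T P (FOr \<phi> (neg \<phi>))})))"

definition TPinf :: "pint \<times> pint" where
  "TPinf = lfp GammaTP"

definition Pinf_plus :: "nat set" where
  "Pinf_plus = fst (snd TPinf)"

end

theory Submission
  imports Defs
begin

fun teval :: "(nat \<Rightarrow> nat) \<Rightarrow> tm \<Rightarrow> nat" where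
  "teval e (TVar n) = e n"
| "teval e TZero = 0"
| "teval e (TSuc t) = Suc (teval e t)"
| "teval e (TPlus s t) = teval e s + teval e t"
| "teval e (TTimes s t) = teval e s * teval e t"

fun ev :: "nat set \<Rightarrow> nat set \<Rightarrow> (nat \<Rightarrow> nat) \<Rightarrow> fm \<Rightarrow> bool" where
  "ev A B e (FEq s t) = (teval e s = teval e t)"
| "ev A B e (FNeq s t) = (teval e s \<noteq> teval e t)"
| "ev A B e (FT t) = (teval e t \<in> A)"
| "ev A B e (FNT t) = (teval e t \<notin> A)"
| "ev A B e (FP t) = (teval e t \<in> B)"
| "ev A B e (FNP t) = (teval e t \<notin> B)"
| "ev A B e (FAnd a b) = (ev A B e a \<and> ev A B e b)"
| "ev A B e (FOr a b) = (ev A B e a \<or> ev A B e b)"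
| "ev A B e (FAll x a) = (\<forall>n. ev A B (e(x:=n)) a)"
| "ev A B e (FEx x a) = (\<exists>n. ev A B (e(x:=n)) a)"

lemma ev_neg[simp]: "ev A B e (neg \<phi>) = (\<not> ev A B e \<phi>)"
  by (induction \<phi> arbitrary: e) auto

lemma teval_coinc: "(\<forall>v\<in>tvars t. e v = e' v) \<Longrightarrow> teval e t = teval e' t"
  by (induction t) auto

lemma ev_coinc: "(\<forall>v\<in>fvars \<phi>. e v = e' v) \<Longrightarrow> ev A B e \<phi> = ev A B e' \<phi>"
proof (induction \<phi> arbitrary: e e')
  case (FAll x a)
  have "\<And>n. ev A B (e(x:=n)) a = ev A B (e'(x:=n)) a"
    using FAll by (intro FAll.IH) auto
  then show ?case by simp
next
  case (FEx x a)
  have "\<And>n. ev A B (e(x:=n)) a = ev A B (e'(x:=n)) a"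
    using FEx by (intro FEx.IH) auto
  then show ?case by simp
qed (simp add: ball_Un; metis teval_coinc)+

lemma tsubst_nofree: "x \<notin> tvars t \<Longrightarrow> tsubst t x u = t"
  by (induction t) auto

lemma fsubst_nofree: "x \<notin> fvars \<phi> \<Longrightarrow> fsubst \<phi> x u = \<phi>"
  by (induction \<phi>) (auto simp: tsubst_nofree)

lemma teval_subst: "teval e (tsubst t x u) = teval (e(x := teval e u)) t"
  by (induction t) auto

lemma ev_subst: "free_for u x \<phi> \<Longrightarrow> ev A B e (fsubst \<phi> x u) = ev A B (e(x := teval e u)) \<phi>"
proof (induction \<phi> arbitrary: e)
  case (FAll y a)
  show ?case
  proof (cases "y = x")
    case True
    have eq: "\<And>n. (e(x := teval e u))(x := n) = e(x:=n)" by simp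
    show ?thesis using True by (simp only: fsubst.simps if_True simp_thms ev.simps eq)
  next
    case False
    show ?thesis
    proof (cases "x \<in> fvars (FAll y a)")
      case False
      then have "fsubst (FAll y a) x u = FAll y a" by (intro fsubst_nofree)
      moreover have "ev A B e (FAll y a) = ev A B (e(x := teval e u)) (FAll y a)"
        using False by (intro ev_coinc) auto
      ultimately show ?thesis by (simp only:)
    next
      case True
      with FAll.prems have h: "y \<notin> tvars u" "free_for u x a" by auto
      have "\<And>n. teval (e(y:=n)) u = teval e u" using h by (intro teval_coinc) auto
      note tv = this
      have "ev A B e (fsubst (FAll y a) x u) = (\<forall>n. ev A B (e(y:=n)) (fsubst a x u))"
        using False by simp
      also have "\<dots> = (\<forall>n. ev A B ((e(y:=n))(x:=teval e u)) a)"
      proof -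
        have "ev A B (e(y:=n)) (fsubst a x u) = ev A B ((e(y:=n))(x:=teval (e(y:=n)) u)) a" for n
          by (rule FAll.IH[OF h(2)])
        then show ?thesis by (simp only: tv)
      qed
      also have "\<dots> = ev A B (e(x := teval e u)) (FAll y a)"
        using False by (simp add: fun_upd_twist)
      finally show ?thesis .
    qed
  qed
next
  case (FEx y a)
  show ?case
  proof (cases "y = x")
    case True
    have eq: "\<And>n. (e(x := teval e u))(x := n) = e(x:=n)" by simp
    show ?thesis using True by (simp only: fsubst.simps if_True simp_thms ev.simps eq)
  next
    case False
    show ?thesis
    proof (cases "x \<in> fvars (FEx y a)")
      case False
      then have "fsubst (FEx y a) x u = FEx y a" by (intro fsubst_nofree)
      moreover have "ev A B e (FEx y a) = ev A B (e(x := teval e u)) (FEx y a)"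
        using False by (intro ev_coinc) auto
      ultimately show ?thesis by (simp only:)
    next
      case True
      with FEx.prems have h: "y \<notin> tvars u" "free_for u x a" by auto
      have "\<And>n. teval (e(y:=n)) u = teval e u" using h by (intro teval_coinc) auto
      note tv = this
      have "ev A B e (fsubst (FEx y a) x u) = (\<exists>n. ev A B (e(y:=n)) (fsubst a x u))"
        using False by simp
      also have "\<dots> = (\<exists>n. ev A B ((e(y:=n))(x:=teval e u)) a)"
      proof -
        have "ev A B (e(y:=n)) (fsubst a x u) = ev A B ((e(y:=n))(x:=teval (e(y:=n)) u)) a" for n
          by (rule FEx.IH[OF h(2)])
        then show ?thesis by (simp only: tv)
      qed
      also have "\<dots> = ev A B (e(x := teval e u)) (FEx y a)"
        using False by (simp add: fun_upd_twist)
      finally show ?thesis .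
    qed
  qed
qed (auto simp: teval_subst)

definition valid :: "nat set \<Rightarrow> nat set \<Rightarrow> fm set \<Rightarrow> fm set \<Rightarrow> bool" where
  "valid A B G D \<longleftrightarrow> (\<forall>e. (\<forall>\<phi>\<in>G. ev A B e \<phi>) \<longrightarrow> (\<exists>\<psi>\<in>D. ev A B e \<psi>))"

lemma ev_upd_set: "y \<notin> fvs G \<Longrightarrow> \<phi> \<in> G \<Longrightarrow> ev A B (e(y:=n)) \<phi> = ev A B e \<phi>"
  unfolding fvs_def by (intro ev_coinc) auto

lemma free_for_small: "tvars u \<subseteq> {x} \<Longrightarrow> free_for u x \<phi>"
  by (induction \<phi>) auto

lemma sound: "derivable G D \<Longrightarrow> valid A B G D"
proof (induction rule: derivable.induct)
  case (allR \<Gamma> \<Delta> \<phi> x y)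
  show ?case unfolding valid_def
  proof (intro allI impI)
    fix e assume g: "\<forall>\<phi>\<in>\<Gamma>. ev A B e \<phi>"
    show "\<exists>\<psi>\<in>\<Delta> \<union> {FAll x \<phi>}. ev A B e \<psi>"
    proof (cases "\<exists>\<psi>\<in>\<Delta>. ev A B e \<psi>")
      case True then show ?thesis by blast
    next
      case False
      have "ev A B (e(x:=n)) \<phi>" for n
      proof -
        have "\<forall>\<phi>\<in>\<Gamma>. ev A B (e(y:=n)) \<phi>" using g ev_upd_set[OF allR.hyps(3)] by blast
        moreover have "\<forall>\<psi>\<in>\<Delta>. \<not> ev A B (e(y:=n)) \<psi>" using False ev_upd_set[OF allR.hyps(4)] by blast
        ultimately have "ev A B (e(y:=n)) (fsubst \<phi> x (TVar y))"
          using allR.IH unfolding valid_def by blast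
        then have "ev A B (e(y:=n, x:=n)) \<phi>" using allR.hyps(2) by (simp add: ev_subst)
        moreover have "ev A B (e(y:=n, x:=n)) \<phi> = ev A B (e(x:=n)) \<phi>"
          using allR.hyps(5) by (intro ev_coinc) auto
        ultimately show ?thesis by (simp only:)
      qed
      then show ?thesis by simp
    qed
  qed
next
  case (exL \<Gamma> \<phi> x y \<Delta>)
  show ?case unfolding valid_def
  proof (intro allI impI)
    fix e assume g: "\<forall>\<phi>'\<in>\<Gamma> \<union> {FEx x \<phi>}. ev A B e \<phi>'"
    then obtain n where n: "ev A B (e(x:=n)) \<phi>" by auto
    have "ev A B (e(y:=n, x:=n)) \<phi> = ev A B (e(x:=n)) \<phi>"
      using exL.hyps(5) by (intro ev_coinc) auto
    then have "ev A B (e(y:=n)) (fsubst \<phi> x (TVar y))" using n exL.hyps(2) by (simp add: ev_subst)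
    moreover have "\<forall>\<phi>\<in>\<Gamma>. ev A B (e(y:=n)) \<phi>" using g ev_upd_set[OF exL.hyps(3)] by blast
    ultimately obtain \<psi> where "\<psi> \<in> \<Delta>" "ev A B (e(y:=n)) \<psi>"
      using exL.IH unfolding valid_def by blast
    then show "\<exists>\<psi>\<in>\<Delta>. ev A B e \<psi>" using ev_upd_set[OF exL.hyps(4)] by blast
  qed
next
  case (ind \<Gamma> \<phi> \<Delta> x t)
  show ?case unfolding valid_def
  proof (intro allI impI)
    fix e assume g: "\<forall>\<phi>'\<in>\<Gamma> \<union> {fsubst \<phi> x TZero}. ev A B e \<phi>'"
    show "\<exists>\<psi>\<in>\<Delta> \<union> {fsubst \<phi> x t}. ev A B e \<psi>"
    proof (cases "\<exists>\<psi>\<in>\<Delta>. ev A B e \<psi>")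
      case True then show ?thesis by blast
    next
      case False
      have ff0: "free_for TZero x \<phi>" by (rule free_for_small) auto
      have ffS: "free_for (TSuc (TVar x)) x \<phi>" by (rule free_for_small) auto
      have "ev A B (e(x:=n)) \<phi>" for n
      proof (induction n)
        case 0
        have "ev A B (e(x:=0)) \<phi>" using g ff0 by (simp add: ev_subst)
        then show ?case by (simp add: fun_upd_def)
      next
        case (Suc n)
        have "\<forall>\<phi>\<in>\<Gamma>. ev A B (e(x:=n)) \<phi>" using g ev_upd_set[OF ind.hyps(2)] by blast
        moreover have "\<forall>\<psi>\<in>\<Delta>. \<not> ev A B (e(x:=n)) \<psi>" using False ev_upd_set[OF ind.hyps(3)] by blast
        ultimately have "ev A B (e(x:=n)) (fsubst \<phi> x (TSuc (TVar x)))"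
          using ind.IH Suc unfolding valid_def by blast
        then have "ev A B (e(x:=Suc n)) \<phi>" using ffS by (simp add: ev_subst)
        then show ?case by (simp add: fun_upd_def)
      qed
      then show ?thesis using ind.hyps(4) by (simp add: ev_subst)
    qed
  qed
next
  case (repl \<Gamma> \<Delta> \<phi> x t s)
  then show ?case unfolding valid_def by (auto simp: ev_subst)
next
  case (allL \<Gamma> \<phi> x t \<Delta>)
  then show ?case unfolding valid_def by (auto simp: ev_subst)
next
  case (exR \<Gamma> \<Delta> \<phi> x t)
  then show ?case unfolding valid_def by (auto simp: ev_subst)
qed (unfold valid_def, auto; blast)+

lemma tcode_inj: "tcode s = tcode t \<Longrightarrow> s = t"
  by (induction s arbitrary: t; case_tac t; auto simp: prod_encode_eq)

lemma code_FP: "code \<phi> = code (FP t) \<Longrightarrow> \<phi> = FP t"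
  by (cases \<phi>) (auto simp: prod_encode_eq tcode_inj)

lemma code_FNP: "code \<phi> = code (FNP t) \<Longrightarrow> \<phi> = FNP t"
  by (cases \<phi>) (auto simp: prod_encode_eq tcode_inj)

lemma not_bp_FP: "\<not> base_paradoxical (FP t)"
proof
  assume "base_paradoxical (FP t)"
  then have "derivable {FNT (quote (FP t))} {FP t}" unfolding base_paradoxical_def by blast
  then have "valid {} {} {FNT (quote (FP t))} {FP t}" by (rule sound)
  then show False unfolding valid_def by simp
qed

lemma not_bp_FNP: "\<not> base_paradoxical (FNP t)"
proof
  assume "base_paradoxical (FNP t)"
  then have "derivable {FNP t} {FNT (quote (FNP t))}" unfolding base_paradoxical_def by blast
  then have "valid UNIV {} {FNP t} {FNT (quote (FNP t))}" by (rule sound)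
  then show False unfolding valid_def by simp
qed

lemma satP_FP: "\<not> satP T P (FP t)"
  unfolding satP_def using not_bp_FP not_bp_FNP by simp

lemma satP_FNP: "\<not> satP T P (FNP t)"
  unfolding satP_def using not_bp_FP not_bp_FNP by simp

theorem mainTheorem9:
  fixes t :: tm
  assumes "closed t"
  shows "code (FP t) \<notin> Pinf_plus \<and> code (FNP t) \<notin> Pinf_plus"
proof -
  define S :: "pint \<times> pint" where
    "S = ((UNIV, UNIV), (UNIV - {code (FP t), code (FNP t)}, UNIV))"
  have "GammaTP S \<le> S"
  proof -
    have "{code \<phi> | \<phi>. sentence \<phi> \<and> satP (fst S) (snd S) \<phi>} \<subseteq> UNIV - {code (FP t), code (FNP t)}"
    proof
      fix c assume "c \<in> {code \<phi> | \<phi>. sentence \<phi> \<and> satP (fst S) (snd S) \<phi>}"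
      then obtain \<phi> where c: "c = code \<phi>" and s: "satP (fst S) (snd S) \<phi>" by blast
      have "code \<phi> \<noteq> code (FP t)"
      proof
        assume "code \<phi> = code (FP t)"
        then have "\<phi> = FP t" by (rule code_FP)
        then show False using s satP_FP by simp
      qed
      moreover have "code \<phi> \<noteq> code (FNP t)"
      proof
        assume "code \<phi> = code (FNP t)"
        then have "\<phi> = FNP t" by (rule code_FNP)
        then show False using s satP_FNP by simp
      qed
      ultimately show "c \<in> UNIV - {code (FP t), code (FNP t)}" using c by simp
    qed
    then show ?thesis unfolding GammaTP_def S_def Let_def
      by (simp add: less_eq_prod_def)
  qed
  then have "lfp GammaTP \<le> S" by (rule lfp_lowerbound)
  then have "Pinf_plus \<subseteq> fst (snd S)" unfolding Pinf_plus_def TPinf_def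
    by (simp add: less_eq_prod_def)
  then show ?thesis unfolding S_def by auto
qed

end
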